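(* Let $p\in[0,1)$, $\alpha\in[0,1]$, $0\le h_1<\dots<h_N\le1$, and nonnegative weights $f_0^S(h_j),f_0^{NS}(h_j)$, $j=1,\dots,N$, each summing to $1$; set $f_0(h_j)=\alpha f_0^S(h_j)+(1-\alpha)f_0^{NS}(h_j)$ with $f_0(h_N)>0$, and $f_0([h_i,1])=\sum_{j\ge i}f_0(h_j)$. Let $A=(A_{ij})_{i,j=1}^N$ be the matrix $$A_{ij}=\begin{cases}(1-\alpha)f_0^{NS}(h_i)-\big(p+(1-p)f_0([h_i,1])\big),& i=j,\\ (1-\alpha)\big[p+(1-p)1_{\{j\ge i\}}\big]f_0^{NS}(h_j),& i\ne j.\end{cases}$$ Then every eigenvalue $z\in\mathbb{C}$ of $A$ satisfies $\mathrm{Re}\,z\le-p\alpha-(1-p)\alpha f_0^S(h_N)$.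
   Context: $A$ is the matrix of the linear ODE system satisfied by the mean opinions of non-stubborn individuals at each hierarchy level; $\alpha$ is the fraction of stubborn individuals, $f_0^S(h_j)$ and $f_0^{NS}(h_j)$ the proportions of level $h_j$ within the stubborn and non-stubborn populations. *)

theory Defs
  imports Complex_Main "Jordan_Normal_Form.Char_Poly"
begin

text \<open>Levels are indexed 0..N-1 (paper: 1..N). f0 j = alpha fS j + (1-alpha) fNS j.\<close>

definition f0 :: "real \<Rightarrow> (nat \<Rightarrow> real) \<Rightarrow> (nat \<Rightarrow> real) \<Rightarrow> nat \<Rightarrow> real" where
  "f0 \<alpha> fS fNS j = \<alpha> * fS j + (1 - \<alpha>) * fNS j"

definition f0_tail :: "nat \<Rightarrow> real \<Rightarrow> (nat \<Rightarrow> real) \<Rightarrow> (nat \<Rightarrow> real) \<Rightarrow> nat \<Rightarrow> real" where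
  "f0_tail N \<alpha> fS fNS i = (\<Sum>j\<in>{i..<N}. f0 \<alpha> fS fNS j)"

definition opinion_matrix ::
  "nat \<Rightarrow> real \<Rightarrow> real \<Rightarrow> (nat \<Rightarrow> real) \<Rightarrow> (nat \<Rightarrow> real) \<Rightarrow> real mat" where
  "opinion_matrix N p \<alpha> fS fNS = mat N N (\<lambda>(i, j).
     if i = j then (1 - \<alpha>) * fNS i - (p + (1 - p) * f0_tail N \<alpha> fS fNS i)
     else (1 - \<alpha>) * (p + (1 - p) * (if j \<ge> i then 1 else 0)) * fNS j)"

end

theory Submission
  imports Defs
begin

lemma gersh_row:
  fixes a :: "nat \<Rightarrow> real" and v :: "nat \<Rightarrow> complex" and z :: complex
  assumes fin: "finite I" and iI: "i \<in> I"
    and nn: "\<And>j. j \<in> I \<Longrightarrow> j \<noteq> i \<Longrightarrow> 0 \<le> a j"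
    and eq: "(\<Sum>j\<in>I. of_real (a j) * v j) = z * v i"
    and mx: "\<And>j. j \<in> I \<Longrightarrow> cmod (v j) \<le> cmod (v i)"
    and nz: "v i \<noteq> 0"
  shows "Re z \<le> (\<Sum>j\<in>I. a j)"
proof -
  let ?J = "I - {i}"
  have s1: "(\<Sum>j\<in>I. of_real (a j) * v j) = of_real (a i) * v i + (\<Sum>j\<in>?J. of_real (a j) * v j)"
    using sum.remove[OF fin iI] by blast
  have s2: "(\<Sum>j\<in>I. a j) = a i + (\<Sum>j\<in>?J. a j)"
    using sum.remove[OF fin iI] by blast
  have e: "(z - of_real (a i)) * v i = (\<Sum>j\<in>?J. of_real (a j) * v j)"
    using eq s1 by (simp add: algebra_simps)
  have "(Re z - a i) * cmod (v i) \<le> cmod (z - of_real (a i)) * cmod (v i)"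
    by (intro mult_right_mono) (use complex_Re_le_cmod[of "z - of_real (a i)"] in auto)
  also have "\<dots> = cmod (\<Sum>j\<in>?J. of_real (a j) * v j)"
    using e by (metis norm_mult)
  also have "\<dots> \<le> (\<Sum>j\<in>?J. cmod (of_real (a j) * v j))"
    by (rule norm_sum)
  also have "\<dots> = (\<Sum>j\<in>?J. a j * cmod (v j))"
    by (intro sum.cong) (auto simp: norm_mult nn)
  also have "\<dots> \<le> (\<Sum>j\<in>?J. a j * cmod (v i))"
    by (intro sum_mono mult_left_mono) (auto simp: nn mx)
  also have "\<dots> = (\<Sum>j\<in>?J. a j) * cmod (v i)"
    by (simp add: sum_distrib_right)
  finally have "(Re z - a i) * cmod (v i) \<le> (\<Sum>j\<in>?J. a j) * cmod (v i)" .
  then have "Re z - a i \<le> (\<Sum>j\<in>?J. a j)"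
    using nz by (simp add: mult_le_cancel_right)
  then show ?thesis using s2 by simp
qed

theorem proposition4p5:
  fixes N :: nat and p \<alpha> :: real and h fS fNS :: "nat \<Rightarrow> real" and z :: complex
  assumes hp: "0 \<le> p" "p < 1"
    and h\<alpha>: "0 \<le> \<alpha>" "\<alpha> \<le> 1"
    and hh0: "0 < N \<Longrightarrow> 0 \<le> h 0"
    and hh1: "0 < N \<Longrightarrow> h (N - 1) \<le> 1"
    and hmono: "\<And>i j. i < j \<Longrightarrow> j < N \<Longrightarrow> h i < h j"
    and hfS: "\<And>j. j < N \<Longrightarrow> 0 \<le> fS j" "(\<Sum>j<N. fS j) = 1"
    and hfNS: "\<And>j. j < N \<Longrightarrow> 0 \<le> fNS j" "(\<Sum>j<N. fNS j) = 1"
    and hpos: "f0 \<alpha> fS fNS (N - 1) > 0"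
    and heig: "eigenvalue (map_mat complex_of_real (opinion_matrix N p \<alpha> fS fNS)) z"
  shows "Re z \<le> - p * \<alpha> - (1 - p) * \<alpha> * fS (N - 1)"
proof -
  have N0: "0 < N" using hfS(2) by (cases N) auto
  define a where "a i j = (if i = j then (1 - \<alpha>) * fNS i - (p + (1 - p) * f0_tail N \<alpha> fS fNS i)
     else (1 - \<alpha>) * (p + (1 - p) * (if j \<ge> i then 1 else 0)) * fNS j)" for i j
  let ?M = "map_mat complex_of_real (opinion_matrix N p \<alpha> fS fNS)"
  have dimM: "dim_row ?M = N" "dim_col ?M = N" by (auto simp: opinion_matrix_def)
  have Mij: "?M $$ (i, j) = of_real (a i j)" if "i < N" "j < N" for i j
    using that by (simp add: opinion_matrix_def a_def)
  obtain v where v: "v \<in> carrier_vec N" "v \<noteq> 0\<^sub>v N" "?M *\<^sub>v v = z \<cdot>\<^sub>v v"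
    using heig dimM unfolding eigenvalue_def eigenvector_def by auto
  have dv: "dim_vec v = N" using v(1) by auto
  have roweq: "(\<Sum>j\<in>{0..<N}. of_real (a i j) * v $ j) = z * v $ i" if "i < N" for i
  proof -
    have "(?M *\<^sub>v v) $ i = z * v $ i" using v(3) that dv by simp
    moreover have "(?M *\<^sub>v v) $ i = (\<Sum>j\<in>{0..<N}. of_real (a i j) * v $ j)"
      using that dimM dv Mij by (auto simp: scalar_prod_def intro!: sum.cong)
    ultimately show ?thesis by simp
  qed
  define m where "m = Max ((\<lambda>j. cmod (v $ j)) ` {0..<N})"
  have "m \<in> (\<lambda>j. cmod (v $ j)) ` {0..<N}" unfolding m_def using N0 by (intro Max_in) auto
  then obtain i where i: "i < N" "cmod (v $ i) = m" by auto
  have mx: "cmod (v $ j) \<le> cmod (v $ i)" if "j \<in> {0..<N}" for j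
    using i(2) that unfolding m_def by (metis Max_ge finite_atLeastLessThan finite_imageI image_eqI)
  have nz: "v $ i \<noteq> 0"
  proof
    assume "v $ i = 0"
    then have "\<forall>j<N. v $ j = 0" using mx by fastforce
    then have "v = 0\<^sub>v N" using dv by (intro eq_vecI) auto
    with v(2) show False by simp
  qed
  have nn: "0 \<le> a i j" if "j \<noteq> i" "j < N" for j
    using that hp h\<alpha> hfNS(1)[of j] by (simp add: a_def)
  have "Re z \<le> (\<Sum>j\<in>{0..<N}. a i j)"
    by (rule gersh_row[where v="\<lambda>j. v $ j"]) (use i nn roweq mx nz in auto)
  also have "(\<Sum>j\<in>{0..<N}. a i j) = - p * \<alpha> - (1 - p) * \<alpha> * (\<Sum>j\<in>{i..<N}. fS j)"
  proof -
    have "(\<Sum>j\<in>{0..<N}. a i j) = (\<Sum>j\<in>{0..<N}. (1 - \<alpha>) * (p + (1 - p) * (if j \<ge> i then 1 else 0)) * fNS j)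
       - (p + (1 - p) * f0_tail N \<alpha> fS fNS i)"
    proof -
      have "(\<Sum>j\<in>{0..<N}. a i j) = (\<Sum>j\<in>{0..<N}. (1 - \<alpha>) * (p + (1 - p) * (if j \<ge> i then 1 else 0)) * fNS j
          - (if j = i then p + (1 - p) * f0_tail N \<alpha> fS fNS i else 0))"
        by (intro sum.cong) (auto simp: a_def algebra_simps)
      also have "\<dots> = (\<Sum>j\<in>{0..<N}. (1 - \<alpha>) * (p + (1 - p) * (if j \<ge> i then 1 else 0)) * fNS j)
          - (p + (1 - p) * f0_tail N \<alpha> fS fNS i)"
        using i by (simp add: sum_subtractf)
      finally show ?thesis .
    qed
    also have "(\<Sum>j\<in>{0..<N}. (1 - \<alpha>) * (p + (1 - p) * (if j \<ge> i then 1 else 0)) * fNS j)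
       = (1 - \<alpha>) * p * (\<Sum>j\<in>{0..<N}. fNS j) + (1 - \<alpha>) * (1 - p) * (\<Sum>j\<in>{0..<N}. if j \<ge> i then fNS j else 0)"
    proof -
      have "(\<Sum>j\<in>{0..<N}. (1 - \<alpha>) * (p + (1 - p) * (if j \<ge> i then 1 else 0)) * fNS j)
        = (\<Sum>j\<in>{0..<N}. (1 - \<alpha>) * p * fNS j + (1 - \<alpha>) * (1 - p) * (if j \<ge> i then fNS j else 0))"
        by (intro sum.cong) (auto simp: algebra_simps)
      then show ?thesis by (simp only: sum.distrib sum_distrib_left[symmetric])
    qed
    also have "(\<Sum>j\<in>{0..<N}. if j \<ge> i then fNS j else 0) = (\<Sum>j\<in>{i..<N}. fNS j)"
      by (simp add: sum.If_cases) (intro sum.cong, auto)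
    also have "(\<Sum>j\<in>{0..<N}. fNS j) = 1" using hfNS(2) by (simp add: atLeast0LessThan)
    also have "f0_tail N \<alpha> fS fNS i = \<alpha> * (\<Sum>j\<in>{i..<N}. fS j) + (1 - \<alpha>) * (\<Sum>j\<in>{i..<N}. fNS j)"
      by (simp add: f0_tail_def f0_def sum.distrib sum_distrib_left)
    finally show ?thesis by (simp add: algebra_simps)
  qed
  also have "\<dots> \<le> - p * \<alpha> - (1 - p) * \<alpha> * fS (N - 1)"
  proof -
    have "fS (N - 1) \<le> (\<Sum>j\<in>{i..<N}. fS j)"
      by (rule member_le_sum) (use i hfS(1) in auto)
    moreover have "0 \<le> (1 - p) * \<alpha>" using hp h\<alpha> by simp
    ultimately show ?thesis by (smt (verit) mult_left_mono)
  qed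
  finally show ?thesis .
qed

end
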